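(* There exist absolute constants $c_1$, $c_2$ and $c_3$ for which the following holds. Let $v \in \mathbb{R}^N$ and suppose there are $A,B>0$ and $1 \leq \alpha \leq 2$ such that for every $I \subset \{1,\dots,N\}$, $$ \Big(\sum_{i \in I} v_i^2 \Big)^{1/2} \leq A + B \sqrt{|I|}\log^{1/\alpha}\left(eN/|I|\right). $$ If $\beta \geq c_1B\max\{ \log^{1/\alpha}(c_2NB^2/A^2),1\}$ and $E_\beta = \{i: |v_i| \geq \beta \}$, then $$ |E_\beta| \leq \max \left\{ \frac{4A^2}{\beta^2}, eN \exp(-(\beta/2B)^{\alpha})\right\} \quad \text{and} \quad \Big(\sum_{i \in E_\beta} v_i^2\Big)^{1/2} \leq c_3 A. $$ *)

theory Defs
  imports Complex_Main
begin

text \<open>log^{1/alpha}(x), read as (log x)^{1/alpha} with the natural logarithm;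
  a negative logarithm is truncated to 0 (where the paper's expression is undefined).\<close>
definition logpow :: "real \<Rightarrow> real \<Rightarrow> real" where
  "logpow a x = (max 0 (ln x)) powr (1 / a)"

end

theory Submission
  imports Defs
begin

lemma sq_exp_bound:
  fixes u :: real assumes "u \<ge> 0"
  shows "u\<^sup>2 \<le> 64 * exp (u/4)"
proof -
  have "u/8 \<le> exp (u/8)" using exp_ge_add_one_self[of "u/8"] by linarith
  hence "(u/8)\<^sup>2 \<le> (exp (u/8))\<^sup>2" using assms by (intro power_mono) auto
  also have "(exp (u/8))\<^sup>2 = exp (u/4)" by (simp add: power2_eq_square flip: exp_add)
  finally show ?thesis by (simp add: power_divide)
qed

lemma main:
  fixes N :: nat and v :: "nat \<Rightarrow> real" and A B \<alpha> \<beta> :: real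
  assumes N: "N \<ge> 1" and A: "A > 0" and B: "B > 0" and a1: "1 \<le> \<alpha>" and a2: "\<alpha> \<le> 2"
    and hyp: "\<forall>I. I \<subseteq> {1..N} \<and> I \<noteq> {} \<longrightarrow>
         sqrt (\<Sum>i\<in>I. (v i)\<^sup>2) \<le> A + B * sqrt (real (card I)) * logpow \<alpha> (exp 1 * real N / real (card I))"
    and hb: "\<beta> \<ge> 4 * B * max (logpow \<alpha> (200 * real N * B\<^sup>2 / A\<^sup>2)) 1"
  shows "real (card {i \<in> {1..N}. \<bar>v i\<bar> \<ge> \<beta>})
        \<le> max (4 * A\<^sup>2 / \<beta>\<^sup>2) (exp 1 * real N * exp (- ((\<beta> / (2 * B)) powr \<alpha>))) \<and>
      sqrt (\<Sum>i\<in>{i \<in> {1..N}. \<bar>v i\<bar> \<ge> \<beta>}. (v i)\<^sup>2) \<le> 2 * A"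
proof -
  define E where "E = {i \<in> {1..N}. \<bar>v i\<bar> \<ge> \<beta>}"
  define k where "k = real (card E)"
  define X where "X = 200 * real N * B\<^sup>2 / A\<^sup>2"
  define m where "m = max (logpow \<alpha> X) 1"
  define t where "t = (\<beta> / (2 * B)) powr \<alpha>"
  have finE: "finite E" and Esub: "E \<subseteq> {1..N}" unfolding E_def by auto
  have m1: "m \<ge> 1" unfolding m_def by simp
  have hb': "\<beta> \<ge> 4 * B * m" using hb unfolding m_def X_def .
  have "4 * B * 1 \<le> 4 * B * m" using m1 B by (intro mult_left_mono) auto
  hence bpos: "\<beta> \<ge> 4 * B" using hb' by linarith
  hence bpos': "\<beta> > 0" using B by linarith
  show ?thesis
  proof (cases "E = {}")
    case True
    then show ?thesis using A unfolding E_def[symmetric] by (auto simp: le_max_iff_disj)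
  next
    case False
    have k1: "k \<ge> 1" unfolding k_def using False finE by (simp add: Suc_leI card_gt_0_iff)
    have kN: "k \<le> N" unfolding k_def using card_mono[OF _ Esub] by fastforce
    define S where "S = (\<Sum>i\<in>E. (v i)\<^sup>2)"
    define u where "u = ln (exp 1 * real N / k)"
    define L where "L = logpow \<alpha> (exp 1 * real N / k)"
    have L0: "L \<ge> 0" unfolding L_def logpow_def by simp
    have H: "sqrt S \<le> A + B * sqrt k * L"
      using hyp[rule_format, of E] Esub False unfolding S_def k_def L_def by auto
    have "k * \<beta>\<^sup>2 \<le> S"
    proof -
      have "(\<Sum>i\<in>E. \<beta>\<^sup>2) \<le> S" unfolding S_def
      proof (rule sum_mono)
        fix i assume "i \<in> E"
        hence "\<beta> \<le> \<bar>v i\<bar>" unfolding E_def by auto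
        hence "\<beta>\<^sup>2 \<le> \<bar>v i\<bar>\<^sup>2" using bpos' by (intro power_mono) auto
        thus "\<beta>\<^sup>2 \<le> (v i)\<^sup>2" by simp
      qed
      thus ?thesis unfolding k_def by simp
    qed
    hence lo: "\<beta> * sqrt k \<le> sqrt S"
      using bpos' k1 by (metis mult.commute real_le_rsqrt real_sqrt_mult real_sqrt_pow2_iff
          power2_eq_square real_sqrt_abs abs_of_pos real_sqrt_le_iff)
    show ?thesis
    proof (cases "B * sqrt k * L \<le> A")
      case True
      have "\<beta> * sqrt k \<le> 2 * A" using lo H True by linarith
      hence "(\<beta> * sqrt k)\<^sup>2 \<le> (2*A)\<^sup>2" using bpos' k1 by (intro power_mono) auto
      hence "\<beta>\<^sup>2 * k \<le> 4 * A\<^sup>2" using k1 by (simp add: power_mult_distrib)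
      hence "k \<le> 4 * A\<^sup>2 / \<beta>\<^sup>2" using bpos' by (simp add: field_simps)
      moreover have "sqrt S \<le> 2 * A" using H True by linarith
      ultimately show ?thesis unfolding E_def[symmetric] k_def[symmetric] S_def[symmetric] by auto
    next
      case False
      have L0': "L > 0" using False A B k1 L0
        by (metis less_eq_real_def mult_zero_right not_less)
      have upos: "u > 0"
      proof (rule ccontr)
        assume "\<not> u > 0"
        hence "max 0 u = 0" by simp
        hence "L = 0" unfolding L_def logpow_def u_def by simp
        thus False using L0' by simp
      qed
      have Lu: "L = u powr (1/\<alpha>)" unfolding L_def logpow_def u_def using upos u_def by simp
      have sk: "sqrt k > 0" using k1 by simp
      have "\<beta> * sqrt k < (2 * B * L) * sqrt k" using lo H False by (simp add: algebra_simps)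
      hence "\<beta> < 2 * B * L" using sk by simp
      hence bL: "\<beta> / (2 * B) < L" using B by (simp add: field_simps)
      have "t < L powr \<alpha>" unfolding t_def
        using bL bpos' B a1 by (intro powr_less_mono2) auto
      also have "L powr \<alpha> = u" unfolding Lu powr_powr using a1 upos by simp
      finally have tu: "t < u" .
      have lgX: "logpow \<alpha> X \<ge> 0" unfolding logpow_def by simp
      have "2 * m \<le> \<beta> / (2 * B)" using hb' B by (simp add: field_simps)
      hence t2m: "(2 * m) powr \<alpha> \<le> t" unfolding t_def using m1 a1 by (intro powr_mono2) auto
      have pm: "(2 * m) powr \<alpha> = 2 powr \<alpha> * m powr \<alpha>" using m1 by (simp add: powr_mult)
      have p2: "2 powr \<alpha> \<ge> 2" using powr_mono[of 1 \<alpha> 2] a1 by simp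
      have pm1: "m powr \<alpha> \<ge> 1" using powr_mono[of 0 \<alpha> m] a1 m1 by simp
      have pmX: "m powr \<alpha> \<ge> (logpow \<alpha> X) powr \<alpha>" using lgX a1 m_def
        by (intro powr_mono2) auto
      have lX: "(logpow \<alpha> X) powr \<alpha> = max 0 (ln X)" unfolding logpow_def powr_powr
        using a1 by (cases "ln X > 0") auto
      have "2 * m powr \<alpha> \<le> 2 powr \<alpha> * m powr \<alpha>" using p2 pm1 by (intro mult_right_mono) auto
      hence tm: "2 * m powr \<alpha> \<le> t" using t2m pm by linarith
      have t2: "t \<ge> 2" using tm pm1 by linarith
      have tX: "t \<ge> 2 * max 0 (ln X)" using tm pmX lX by linarith
      have u1: "u \<ge> 1" using tu t2 by simp
      have LU: "L \<le> u" unfolding Lu using powr_mono[of "1/\<alpha>" 1 u] u1 a1 by simp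
      have eu: "exp u = exp 1 * real N / k" unfolding u_def using k1 N by (intro exp_ln) auto
      hence ku: "k = exp 1 * real N * exp (- u)" using k1 by (simp add: exp_minus field_simps)
      have Xpos: "X > 0" unfolding X_def using N A B by simp
      have XB: "B\<^sup>2 * real N = X * A\<^sup>2 / 200" unfolding X_def using A by simp
      have Xe: "X * exp (- max 0 (ln X)) \<le> 1"
      proof (cases "ln X > 0")
        case True thus ?thesis using Xpos by (simp add: exp_minus)
      next
        case False thus ?thesis using Xpos by (simp add: ln_le_zero_iff)
      qed
      have "(B * sqrt k * L)\<^sup>2 = B\<^sup>2 * k * L\<^sup>2" using k1 by (simp add: power_mult_distrib)
      also have "\<dots> \<le> B\<^sup>2 * k * u\<^sup>2" using LU L0 k1
        by (intro mult_left_mono power_mono) auto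
      also have "\<dots> \<le> B\<^sup>2 * k * (64 * exp (u/4))" using sq_exp_bound[of u] upos k1
        by (intro mult_left_mono) auto
      also have "\<dots> = 64 * exp 1 * (B\<^sup>2 * real N) * exp (- (3 * u / 4))"
        unfolding ku by (simp add: algebra_simps flip: exp_add)
      also have "\<dots> \<le> 64 * exp 1 * (B\<^sup>2 * real N) * exp (- max 0 (ln X))"
        using tu tX by (intro mult_left_mono) auto
      also have "\<dots> = 64 * exp 1 / 200 * (X * exp (- max 0 (ln X))) * A\<^sup>2"
        unfolding XB by simp
      also have "\<dots> \<le> 64 * 3 / 200 * 1 * A\<^sup>2"
        using Xe exp_le Xpos by (intro mult_right_mono mult_mono) auto
      also have "\<dots> \<le> A\<^sup>2" by simp
      finally have "(B * sqrt k * L)\<^sup>2 \<le> A\<^sup>2" .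
      hence "B * sqrt k * L \<le> A" by (rule power2_le_imp_le) (use A in linarith)
      with False show ?thesis by linarith
    qed
  qed
qed

theorem lemma4p2:
  shows "\<exists>c1 c2 c3 :: real. c1 > 0 \<and> c2 > 0 \<and> c3 > 0 \<and>
    (\<forall>(N::nat) (v::nat \<Rightarrow> real) (A::real) (B::real) (\<alpha>::real) (\<beta>::real).
      N \<ge> 1 \<and> A > 0 \<and> B > 0 \<and> 1 \<le> \<alpha> \<and> \<alpha> \<le> 2 \<and>
      (\<forall>I. I \<subseteq> {1..N} \<and> I \<noteq> {} \<longrightarrow>
         sqrt (\<Sum>i\<in>I. (v i)\<^sup>2) \<le> A + B * sqrt (real (card I)) * logpow \<alpha> (exp 1 * real N / real (card I))) \<and>
      \<beta> \<ge> c1 * B * max (logpow \<alpha> (c2 * real N * B\<^sup>2 / A\<^sup>2)) 1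
      \<longrightarrow>
      real (card {i \<in> {1..N}. \<bar>v i\<bar> \<ge> \<beta>})
        \<le> max (4 * A\<^sup>2 / \<beta>\<^sup>2) (exp 1 * real N * exp (- ((\<beta> / (2 * B)) powr \<alpha>))) \<and>
      sqrt (\<Sum>i\<in>{i \<in> {1..N}. \<bar>v i\<bar> \<ge> \<beta>}. (v i)\<^sup>2) \<le> c3 * A)"
  apply (rule exI[of _ 4], rule exI[of _ 200], rule exI[of _ 2])
  apply (rule conjI, simp)+
  apply (intro allI impI)
  apply (elim conjE)
  apply (rule main)
         apply assumption+
  done

end
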